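(* Let $r\geq1$ and let $\mathbf a=(a_1,\ldots,a_r)$ be positive integers with $\gcd(a_1,\ldots,a_r)=1$, and let $D=\operatorname{lcm}(a_1,\ldots,a_r)$. Then the Frobenius number satisfies $$F(a_1,\ldots,a_r)\leq D(r-1)-a_1-\cdots-a_r.$$
   Context: The Frobenius number $F(a_1,\ldots,a_r)$ is the largest integer $n$ that cannot be written as $a_1x_1+\cdots+a_rx_r$ with integers $x_1,\ldots,x_r\geq 0$. *)

theory Defs
  imports Main
begin

definition representable :: "nat list \<Rightarrow> int \<Rightarrow> bool" where
  "representable a n \<longleftrightarrow>
     (\<exists>x :: nat \<Rightarrow> nat. n = (\<Sum>i<length a. int (a ! i) * int (x i)))"

definition frobenius :: "nat list \<Rightarrow> int" where
  "frobenius a = (GREATEST n :: int. \<not> representable a n)"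

end

theory Submission
  imports Defs
begin

lemma greatest_le_int:
  fixes P :: "int \<Rightarrow> bool"
  assumes "P k" "\<forall>n. P n \<longrightarrow> n \<le> B"
  shows "(GREATEST n. P n) \<le> B"
proof -
  define S where "S = {n. P n \<and> k \<le> n}"
  have fin: "finite S" using assms(2) by (rule_tac finite_subset[of _ "{k..B}"]) (auto simp: S_def)
  have ne: "k \<in> S" using assms(1) by (simp add: S_def)
  define m where "m = Max S"
  have mS: "m \<in> S" using fin ne m_def Max_in by blast
  have "(GREATEST n. P n) = m"
  proof (rule Greatest_equality)
    show "P m" using mS by (simp add: S_def)
    fix y assume "P y"
    show "y \<le> m"
    proof (cases "k \<le> y")
      case True then have "y \<in> S" using \<open>P y\<close> by (simp add: S_def)
      then show ?thesis using fin m_def by simp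
    next
      case False then show ?thesis using mS by (simp add: S_def)
    qed
  qed
  then show ?thesis using mS assms(2) by (simp add: S_def)
qed

lemma bezout_list:
  "\<exists>y::nat \<Rightarrow> int. int (Gcd (set a)) = (\<Sum>i<length a. int (a!i) * y i)"
proof (induction a)
  case Nil then show ?case by simp
next
  case (Cons x xs)
  then obtain y where y: "int (Gcd (set xs)) = (\<Sum>i<length xs. int (xs!i) * y i)" by blast
  obtain u v where uv: "u * int x + v * int (Gcd (set xs)) = gcd (int x) (int (Gcd (set xs)))"
    using bezout_int by blast
  define y' where "y' = (\<lambda>i. case i of 0 \<Rightarrow> u | Suc j \<Rightarrow> v * y j)"
  have "(\<Sum>i<length (x#xs). int ((x#xs)!i) * y' i) = int x * u + (\<Sum>i<length xs. int (xs!i) * (v * y i))"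
    unfolding length_Cons sum.lessThan_Suc_shift by (simp add: y'_def)
  also have "\<dots> = int x * u + v * (\<Sum>i<length xs. int (xs!i) * y i)"
    by (simp add: sum_distrib_left algebra_simps)
  also have "\<dots> = int x * u + v * int (Gcd (set xs))" using y by simp
  also have "\<dots> = int (Gcd (set (x#xs)))" using uv by (simp add: algebra_simps)
  finally show ?case by metis
qed

theorem proposition5p1:
  fixes a :: "nat list" and r :: nat
  assumes "length a = r" and "r \<ge> 1"
    and "\<forall>i<r. a ! i > 0"
    and "Gcd (set a) = 1"
  shows "frobenius a \<le> int (Lcm (set a)) * (int r - 1) - (\<Sum>i<r. int (a ! i))"
proof -
  define D where "D = Lcm (set a)"
  define B where "B = int D * (int r - 1) - (\<Sum>i<r. int (a ! i))"
  obtain s where r: "r = Suc s" using assms(2) by (cases r) auto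
  have pos: "\<And>i. i < r \<Longrightarrow> a!i > 0" using assms(3) by auto
  have dv: "\<And>i. i < r \<Longrightarrow> a!i dvd D" using assms(1) by (simp add: D_def)
  define d where "d = (\<lambda>i. int (D div a!i))"
  have ad: "\<And>i. i < r \<Longrightarrow> int (a!i) * d i = int D"
    using dv by (simp add: d_def) (metis dvd_mult_div_cancel of_nat_mult)
  have "0 \<notin> set a" using pos assms(1) by (auto simp: in_set_conv_nth)
  then have Dpos: "D > 0" unfolding D_def by (metis Lcm_0_iff finite_set gr0I)
  have dpos: "\<And>i. i < r \<Longrightarrow> d i > 0"
  proof -
    fix i assume i: "i < r"
    have "0 < int (a!i) * d i" using ad[OF i] Dpos by simp
    then show "d i > 0" using pos[OF i] by (simp add: zero_less_mult_iff)
  qed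
  obtain y where y: "1 = (\<Sum>i<r. int (a!i) * y i)" using bezout_list[of a] assms by auto
  have rep: "representable a n" if n: "n > B" for n
  proof -
    define y1 where "y1 = (\<lambda>i. n * y i)"
    have "(\<Sum>i<r. int (a!i) * y1 i) = n * (\<Sum>i<r. int (a!i) * y i)"
      by (simp add: y1_def sum_distrib_left mult.left_commute)
    then have sy1: "n = (\<Sum>i<r. int (a!i) * y1 i)" using y by simp
    define q where "q = (\<lambda>i. y1 i div d i)"
    define m where "m = (\<lambda>i. y1 i mod d i)"
    define z where "z = (\<lambda>i. case i of 0 \<Rightarrow> y1 0 + d 0 * (\<Sum>j<s. q (Suc j)) | Suc j \<Rightarrow> m (Suc j))"
    have e1: "int (a!(Suc j)) * y1 (Suc j) = int D * q (Suc j) + int (a!(Suc j)) * m (Suc j)" if "j < s" for j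
    proof -
      have "y1 (Suc j) = d (Suc j) * q (Suc j) + m (Suc j)" by (simp add: q_def m_def)
      then show ?thesis using ad[of "Suc j"] that r by (simp add: algebra_simps)
    qed
    have "n = int (a!0) * y1 0 + (\<Sum>j<s. int (a!(Suc j)) * y1 (Suc j))"
      using sy1 unfolding r sum.lessThan_Suc_shift by simp
    also have "\<dots> = int (a!0) * y1 0 + (\<Sum>j<s. int D * q (Suc j) + int (a!(Suc j)) * m (Suc j))"
      using e1 by simp
    also have "\<dots> = int (a!0) * z 0 + (\<Sum>j<s. int (a!(Suc j)) * z (Suc j))"
    proof -
      have ad0: "int D = int (a!0) * d 0" using ad[of 0] r by simp
      show ?thesis unfolding ad0 by (simp add: z_def sum.distrib sum_distrib_left algebra_simps)
    qed
    finally have nz: "n = int (a!0) * z 0 + (\<Sum>j<s. int (a!(Suc j)) * z (Suc j))" .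
    have zge: "z (Suc j) \<ge> 0" "z (Suc j) \<le> d (Suc j) - 1" if "j < s" for j
      using dpos[of "Suc j"] that r by (simp_all add: z_def m_def)
    have "(\<Sum>j<s. int (a!(Suc j)) * z (Suc j)) \<le> (\<Sum>j<s. int (a!(Suc j)) * (d (Suc j) - 1))"
      using zge by (intro sum_mono mult_left_mono) auto
    also have "\<dots> = (\<Sum>j<s. int D - int (a!(Suc j)))"
      using ad r by (intro sum.cong) (auto simp: algebra_simps)
    also have "\<dots> = int D * int s - (\<Sum>j<s. int (a!(Suc j)))"
      by (simp add: sum_subtractf)
    finally have le: "(\<Sum>j<s. int (a!(Suc j)) * z (Suc j)) \<le> int D * int s - (\<Sum>j<s. int (a!(Suc j)))" .
    have Bs: "B = int D * int s - int (a!0) - (\<Sum>j<s. int (a!(Suc j)))"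
      unfolding B_def r sum.lessThan_Suc_shift by simp
    have "int (a!0) * z 0 > - int (a!0)" using nz le Bs n by linarith
    then have "int (a!0) * (-1) < int (a!0) * z 0" by simp
    moreover have "int (a!0) > 0" using pos[of 0] r by simp
    ultimately have "-1 < z 0" using mult_less_cancel_left_pos by blast
    then have z0: "z 0 \<ge> 0" by simp
    have zall: "\<And>i. i < r \<Longrightarrow> z i \<ge> 0"
      using z0 zge r by (case_tac i) auto
    define x where "x = (\<lambda>i. nat (z i))"
    have "n = (\<Sum>i<r. int (a!i) * z i)" using nz unfolding r sum.lessThan_Suc_shift by simp
    also have "\<dots> = (\<Sum>i<r. int (a!i) * int (x i))" using zall by (intro sum.cong) (auto simp: x_def)
    finally show ?thesis unfolding representable_def using assms(1) by blast
  qed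
  have neg: "\<not> representable a (-1)"
    unfolding representable_def
  proof
    assume "\<exists>x. - 1 = (\<Sum>i<length a. int (a ! i) * int (x i))"
    then obtain x where "- 1 = (\<Sum>i<length a. int (a ! i) * int (x i))" by blast
    moreover have "(\<Sum>i<length a. int (a ! i) * int (x i)) \<ge> 0" by (intro sum_nonneg) auto
    ultimately show False by linarith
  qed
  have "frobenius a \<le> B" unfolding frobenius_def
    using greatest_le_int[of "\<lambda>n. \<not> representable a n" "-1" B] neg rep by force
  then show ?thesis by (simp add: B_def D_def)
qed

end
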